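(* Run Algorithm 1 on an instance of Problem (P); suppose it performs $k$ iterations and the indices chosen as $i^*$ are $i_1,i_2,\dots,i_k$ in order, and let $x_1,\dots,x_n$ be the values of the variables after the last iteration. Then there exists an optimal solution $(x_1^*,\dots,x_n^* )$ of Problem (P) such that $x_{i_j}^*=x_{i_j}$ for all $j=1,\dots,k$.
   Context: Problem (P): given an integer $n\ge1$, reals $0<q_1\le\cdots\le q_n$, $z_1,\dots,z_n>0$ and $K>0$, maximize $\sum_{i=1}^n x_i$ subject to $0\le x_i\le q_i$ for all $i$, $0\le x_1\le x_2\le\cdots\le x_n$, and $\sum_{i=1}^n z_ix_i\le K$. For $1\le i<j\le n+1$ let $\mathrm{sum}(i,j)=z_i+\cdots+z_{j-1}$ and $\mathrm{avg}(i,j)=\mathrm{sum}(i,j)/(j-i)$. Algorithm 1: Initialize $S=\{0,n+1\}$, $y_i=\mathrm{avg}(i,n+1)$ and $x_i=0$ for $i=1,\dots,n$, and $\hat B=K$. While $\hat B>0$ and $S\ne\{0,1,\dots,n+1\}$, perform an iteration: let $i^*$ be the index $i\in\{1,\dots,n\}\setminus S$ minimizing $y_i$, ties broken in favour of the smallest index; let $i_L=\max\{j\in S:j<i^*\}$ and $i_R=\min\{j\in S:j>i^*\}$; set $d=\min\{\hat B/((i_R-i^* )y_{i^*}),\ q_{i^*}-x_{i^*}\}$; set $\hat B\leftarrow\hat B-d(i_R-i^* )y_{i^*}$; set $x_i\leftarrow x_i+d$ for all $i^*\le i<i_R$; set $y_i\leftarrow\mathrm{avg}(i,i^* )$ for all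 $i_L<i<i^*$; add $i^*$ to $S$. When the loop ends, output $x_1,\dots,x_n$. *)

theory Defs
  imports Complex_Main
begin

text \<open>Problem (P): indices 1..n; vectors are functions nat => real, only values on 1..n matter.\<close>

definition feasibleP :: "nat \<Rightarrow> (nat \<Rightarrow> real) \<Rightarrow> (nat \<Rightarrow> real) \<Rightarrow> real \<Rightarrow> (nat \<Rightarrow> real) \<Rightarrow> bool" where
  "feasibleP n q z K x \<longleftrightarrow>
     (\<forall>i\<in>{1..n}. 0 \<le> x i \<and> x i \<le> q i) \<and>
     (\<forall>i\<in>{1..n}. \<forall>j\<in>{1..n}. i \<le> j \<longrightarrow> x i \<le> x j) \<and>
     (\<Sum>i=1..n. z i * x i) \<le> K"

definition optimalP :: "nat \<Rightarrow> (nat \<Rightarrow> real) \<Rightarrow> (nat \<Rightarrow> real) \<Rightarrow> real \<Rightarrow> (nat \<Rightarrow> real) \<Rightarrow> bool" where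
  "optimalP n q z K x \<longleftrightarrow> feasibleP n q z K x \<and>
     (\<forall>x'. feasibleP n q z K x' \<longrightarrow> (\<Sum>i=1..n. x' i) \<le> (\<Sum>i=1..n. x i))"

definition sumz :: "(nat \<Rightarrow> real) \<Rightarrow> nat \<Rightarrow> nat \<Rightarrow> real" where
  "sumz z i j = (\<Sum>l\<in>{i..<j}. z l)"

definition avgz :: "(nat \<Rightarrow> real) \<Rightarrow> nat \<Rightarrow> nat \<Rightarrow> real" where
  "avgz z i j = sumz z i j / real (j - i)"

record alg_state =
  stS :: "nat set"
  stY :: "nat \<Rightarrow> real"
  stX :: "nat \<Rightarrow> real"
  stB :: real

definition alg_init :: "nat \<Rightarrow> (nat \<Rightarrow> real) \<Rightarrow> real \<Rightarrow> alg_state" where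
  "alg_init n z K = \<lparr> stS = {0, n+1}, stY = (\<lambda>i. avgz z i (n+1)), stX = (\<lambda>i. 0), stB = K \<rparr>"

definition alg_running :: "nat \<Rightarrow> alg_state \<Rightarrow> bool" where
  "alg_running n st \<longleftrightarrow> stB st > 0 \<and> stS st \<noteq> {0..n+1}"

definition alg_istar :: "nat \<Rightarrow> alg_state \<Rightarrow> nat" where
  "alg_istar n st = (LEAST i. i \<in> {1..n} - stS st \<and> (\<forall>j \<in> {1..n} - stS st. stY st i \<le> stY st j))"

definition alg_step :: "nat \<Rightarrow> (nat \<Rightarrow> real) \<Rightarrow> (nat \<Rightarrow> real) \<Rightarrow> alg_state \<Rightarrow> alg_state" where
  "alg_step n q z st =
    (let is = alg_istar n st;
         iL = Max {j \<in> stS st. j < is};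
         iR = Min {j \<in> stS st. j > is};
         d = min (stB st / (real (iR - is) * stY st is)) (q is - stX st is)
     in \<lparr> stS = insert is (stS st),
          stY = (\<lambda>i. if iL < i \<and> i < is then avgz z i is else stY st i),
          stX = (\<lambda>i. if is \<le> i \<and> i < iR then stX st i + d else stX st i),
          stB = stB st - d * real (iR - is) * stY st is \<rparr>)"

definition alg_iter :: "nat \<Rightarrow> (nat \<Rightarrow> real) \<Rightarrow> (nat \<Rightarrow> real) \<Rightarrow> real \<Rightarrow> nat \<Rightarrow> alg_state" where
  "alg_iter n q z K m = (alg_step n q z ^^ m) (alg_init n z K)"

definition alg_num_iter :: "nat \<Rightarrow> (nat \<Rightarrow> real) \<Rightarrow> (nat \<Rightarrow> real) \<Rightarrow> real \<Rightarrow> nat" where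
  "alg_num_iter n q z K = (LEAST m. \<not> alg_running n (alg_iter n q z K m))"

definition alg_chosen :: "nat \<Rightarrow> (nat \<Rightarrow> real) \<Rightarrow> (nat \<Rightarrow> real) \<Rightarrow> real \<Rightarrow> nat \<Rightarrow> nat" where
  "alg_chosen n q z K j = alg_istar n (alg_iter n q z K (j - 1))"

definition alg_output :: "nat \<Rightarrow> (nat \<Rightarrow> real) \<Rightarrow> (nat \<Rightarrow> real) \<Rightarrow> real \<Rightarrow> nat \<Rightarrow> real" where
  "alg_output n q z K = stX (alg_iter n q z K (alg_num_iter n q z K))"

end

theory Submission
  imports Defs
begin

lemma gen_ineq:
  fixes w xp q G :: "nat \<Rightarrow> real" and N :: "nat \<Rightarrow> nat" and T :: "nat set"
  assumes T: "T \<subseteq> {1..n}"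
    and Nn: "N n = Suc n"
    and Nin: "\<forall>a. 1 \<le> a \<longrightarrow> a < n \<longrightarrow> Suc a \<in> T \<longrightarrow> N a = Suc a"
    and Nout: "\<forall>a. 1 \<le> a \<longrightarrow> a < n \<longrightarrow> Suc a \<notin> T \<longrightarrow> N a = N (Suc a)"
    and N1: "\<forall>a\<in>{1..n}. a < N a"
    and G: "\<forall>a. G a = (\<Sum>i\<in>{a..<N a}. w i)"
    and Gpos: "\<forall>s\<in>T. 0 \<le> G s" and Gneg: "\<forall>a\<in>{1..n}-T. G a \<le> 0"
    and mono: "\<forall>i. 1 \<le> i \<longrightarrow> i < n \<longrightarrow> xp i \<le> xp (Suc i)"
    and bnd: "\<forall>s\<in>T. xp s \<le> q s"
    and b: "1 \<le> b" "b \<le> n"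
  shows "(\<Sum>i=b..n. w i * xp i) \<le> xp b * G b + (\<Sum>s\<in>{Suc b..n}. if s\<in>T then q s * G s else 0)"
  using b(2,1)
proof (induction b rule: inc_induct)
  case base
  then show ?case using G Nn by simp
next
  case (step b)
  have IH: "(\<Sum>i=Suc b..n. w i * xp i) \<le> xp (Suc b) * G (Suc b) + (\<Sum>s\<in>{Suc (Suc b)..n}. if s\<in>T then q s * G s else 0)"
    using step by simp
  have e1: "(\<Sum>i=b..n. w i * xp i) = w b * xp b + (\<Sum>i=Suc b..n. w i * xp i)"
    using step by (simp add: sum.atLeast_Suc_atMost)
  have e2: "(\<Sum>s\<in>{Suc b..n}. if s\<in>T then q s * G s else 0) = (if Suc b\<in>T then q (Suc b) * G (Suc b) else 0) + (\<Sum>s\<in>{Suc (Suc b)..n}. if s\<in>T then q s * G s else 0)"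
    using step by (simp add: sum.atLeast_Suc_atMost)
  show ?case
  proof (cases "Suc b \<in> T")
    case True
    have "G b = w b" using G Nin step True by simp
    moreover have "xp (Suc b) * G (Suc b) \<le> q (Suc b) * G (Suc b)"
      using bnd Gpos True by (simp add: mult_right_mono)
    ultimately show ?thesis using e1 e2 IH True by simp
  next
    case False
    have NN: "N b = N (Suc b)" using Nout step False by simp
    have "Suc b < N (Suc b)" using N1 step by simp
    then have "G b = w b + G (Suc b)" using G NN by (simp add: sum.atLeast_Suc_lessThan)
    moreover have "xp (Suc b) * G (Suc b) \<le> xp b * G (Suc b)"
      using mono Gneg False step by (simp add: mult_right_mono_neg)
    ultimately show ?thesis using e1 e2 IH False by (simp add: algebra_simps)
  qed
qed

lemma gen_eq:
  fixes w xp q G :: "nat \<Rightarrow> real" and N :: "nat \<Rightarrow> nat" and T :: "nat set"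
  assumes T: "T \<subseteq> {1..n}"
    and Nn: "N n = Suc n"
    and Nin: "\<forall>a. 1 \<le> a \<longrightarrow> a < n \<longrightarrow> Suc a \<in> T \<longrightarrow> N a = Suc a"
    and Nout: "\<forall>a. 1 \<le> a \<longrightarrow> a < n \<longrightarrow> Suc a \<notin> T \<longrightarrow> N a = N (Suc a)"
    and N1: "\<forall>a\<in>{1..n}. a < N a"
    and G: "\<forall>a. G a = (\<Sum>i\<in>{a..<N a}. w i)"
    and cst: "\<forall>i. 1 \<le> i \<longrightarrow> i < n \<longrightarrow> Suc i \<notin> T \<longrightarrow> xp i = xp (Suc i)"
    and bnd: "\<forall>s\<in>T. xp s * G s = q s * G s"
    and b: "1 \<le> b" "b \<le> n"
  shows "(\<Sum>i=b..n. w i * xp i) = xp b * G b + (\<Sum>s\<in>{Suc b..n}. if s\<in>T then q s * G s else 0)"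
  using b(2,1)
proof (induction b rule: inc_induct)
  case base
  then show ?case using G Nn by simp
next
  case (step b)
  have IH: "(\<Sum>i=Suc b..n. w i * xp i) = xp (Suc b) * G (Suc b) + (\<Sum>s\<in>{Suc (Suc b)..n}. if s\<in>T then q s * G s else 0)"
    using step by simp
  have e1: "(\<Sum>i=b..n. w i * xp i) = w b * xp b + (\<Sum>i=Suc b..n. w i * xp i)"
    using step by (simp add: sum.atLeast_Suc_atMost)
  have e2: "(\<Sum>s\<in>{Suc b..n}. if s\<in>T then q s * G s else 0) = (if Suc b\<in>T then q (Suc b) * G (Suc b) else 0) + (\<Sum>s\<in>{Suc (Suc b)..n}. if s\<in>T then q s * G s else 0)"
    using step by (simp add: sum.atLeast_Suc_atMost)
  show ?case
  proof (cases "Suc b \<in> T")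
    case True
    have "G b = w b" using G Nin step True by simp
    moreover have "xp (Suc b) * G (Suc b) = q (Suc b) * G (Suc b)"
      using bnd True by simp
    ultimately show ?thesis using e1 e2 IH True by simp
  next
    case False
    have NN: "N b = N (Suc b)" using Nout step False by simp
    have "Suc b < N (Suc b)" using N1 step by simp
    then have "G b = w b + G (Suc b)" using G NN by (simp add: sum.atLeast_Suc_lessThan)
    moreover have "xp (Suc b) = xp b"
      using cst False step by simp
    ultimately show ?thesis using e1 e2 IH False by (simp add: algebra_simps)
  qed
qed

definition nxt :: "nat set \<Rightarrow> nat \<Rightarrow> nat" where
  "nxt S a = Min {j\<in>S. a < j}"

lemma nxt_props:
  assumes "finite S" "j \<in> S" "a < j"
  shows "nxt S a \<in> S" "a < nxt S a" "nxt S a \<le> j" "\<And>k. k \<in> S \<Longrightarrow> a < k \<Longrightarrow> nxt S a \<le> k"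
proof -
  have f: "finite {j\<in>S. a < j}" using assms by simp
  have ne: "{j\<in>S. a < j} \<noteq> {}" using assms by blast
  have "nxt S a \<in> {j\<in>S. a < j}" unfolding nxt_def using Min_in[OF f ne] .
  then show "nxt S a \<in> S" "a < nxt S a" by auto
  show "nxt S a \<le> j" unfolding nxt_def using f assms by (intro Min_le) auto
  show "\<And>k. k \<in> S \<Longrightarrow> a < k \<Longrightarrow> nxt S a \<le> k" unfolding nxt_def using f by (intro Min_le) auto
qed

lemma nxt_eqI:
  assumes "finite S" "m \<in> S" "a < m" "\<And>k. k \<in> S \<Longrightarrow> a < k \<Longrightarrow> m \<le> k"
  shows "nxt S a = m"
  using nxt_props[OF assms(1,2,3)] assms by (meson le_antisym)

lemma nxt_insert:
  assumes "finite S" "j \<in> S" "a < j"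
  shows "nxt (insert t S) a = (if a < t \<and> t < nxt S a then t else nxt S a)"
proof -
  note P = nxt_props[OF assms]
  have fi: "finite (insert t S)" using assms by simp
  show ?thesis
  proof (cases "a < t \<and> t < nxt S a")
    case True
    have "nxt (insert t S) a = t"
      by (rule nxt_eqI[OF fi]) (use True P in force)+
    then show ?thesis using True by simp
  next
    case False
    have "nxt (insert t S) a = nxt S a"
      by (rule nxt_eqI[OF fi]) (use False P in force)+
    then show ?thesis using False by simp
  qed
qed

lemma sumz_split: "a \<le> b \<Longrightarrow> b \<le> c \<Longrightarrow> sumz z a c = sumz z a b + sumz z b c"
  unfolding sumz_def by (metis sum.atLeastLessThan_concat)

lemma sumz_avg: "a < b \<Longrightarrow> sumz z a b = real (b - a) * avgz z a b"
  unfolding avgz_def by simp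

lemma sumz_pos: "a < b \<Longrightarrow> \<forall>i\<in>{a..<b}. 0 < z i \<Longrightarrow> 0 < sumz z a b"
  unfolding sumz_def by (intro sum_pos) auto

lemma avg_split: "a < b \<Longrightarrow> b < c \<Longrightarrow>
   real (c - a) * avgz z a c = real (b - a) * avgz z a b + real (c - b) * avgz z b c"
  using sumz_split[of a b c z] sumz_avg[of a b z] sumz_avg[of b c z] sumz_avg[of a c z] by simp

lemma avg_left_le:
  assumes "a < b" "b < c" "avgz z a c \<le> avgz z b c"
  shows "avgz z a b \<le> avgz z a c"
proof -
  have e: "real (c - a) = real (b - a) + real (c - b)" using assms by simp
  have "real (b - a) * avgz z a b = real (b - a) * avgz z a c + real (c - b) * (avgz z a c - avgz z b c)"
    using avg_split[OF assms(1,2), of z] e by (simp add: algebra_simps)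
  also have "\<dots> \<le> real (b - a) * avgz z a c"
    using assms by (simp add: mult_nonneg_nonpos)
  finally show ?thesis using assms(1) by simp
qed

lemma avg_left_ge:
  assumes "a < b" "b < c" "avgz z b c \<le> avgz z a c"
  shows "avgz z a c \<le> avgz z a b"
proof -
  have e: "real (c - a) = real (b - a) + real (c - b)" using assms by simp
  have "real (b - a) * avgz z a b = real (b - a) * avgz z a c + real (c - b) * (avgz z a c - avgz z b c)"
    using avg_split[OF assms(1,2), of z] e by (simp add: algebra_simps)
  also have "\<dots> \<ge> real (b - a) * avgz z a c"
    using assms by simp
  finally show ?thesis using assms(1) by simp
qed

lemma istar_props:
  assumes "{1..n} - stS st \<noteq> {}"
  shows "alg_istar n st \<in> {1..n} - stS st \<and> (\<forall>j\<in>{1..n} - stS st. stY st (alg_istar n st) \<le> stY st j)"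
proof -
  let ?U = "{1..n} - stS st"
  have f: "finite ?U" by simp
  have "Min (stY st ` ?U) \<in> stY st ` ?U" using Min_in[OF _ ] f assms by simp
  then obtain i where i: "i \<in> ?U" "stY st i = Min (stY st ` ?U)" by auto
  have "\<forall>j\<in>?U. stY st i \<le> stY st j" using i f by simp
  then have P: "i \<in> ?U \<and> (\<forall>j\<in>?U. stY st i \<le> stY st j)" using i by simp
  show ?thesis unfolding alg_istar_def by (rule LeastI[of _ i]) (use P in simp)
qed

definition Inv :: "nat \<Rightarrow> (nat \<Rightarrow> real) \<Rightarrow> (nat \<Rightarrow> real) \<Rightarrow> real \<Rightarrow> alg_state \<Rightarrow> real \<Rightarrow> bool" where
  "Inv n q z K st L \<longleftrightarrow>
    0 \<in> stS st \<and> Suc n \<in> stS st \<and> stS st \<subseteq> {0..Suc n} \<and>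
    (\<forall>a\<in>{1..n}-stS st. stY st a = avgz z a (nxt (stS st) a) \<and> L \<le> stY st a) \<and>
    (\<forall>s\<in>{1..n}\<inter>stS st. avgz z s (nxt (stS st) s) \<le> L \<and>
        (stX st s = q s \<or> (stB st = 0 \<and> avgz z s (nxt (stS st) s) = L))) \<and>
    stX st 0 = 0 \<and> (\<forall>a\<in>{1..n}-stS st. stX st a = stX st (a-1)) \<and>
    (\<forall>i\<in>{1..n}. 0 \<le> stX st i \<and> stX st i \<le> q i) \<and>
    (\<forall>i. 1 \<le> i \<longrightarrow> i < n \<longrightarrow> stX st i \<le> stX st (Suc i)) \<and>
    stB st = K - (\<Sum>i=1..n. z i * stX st i) \<and> 0 \<le> stB st \<and> 0 \<le> L \<and> (stB st = 0 \<longrightarrow> 0 < L)"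

lemma avg_pos:
  assumes "\<forall>i\<in>{1..n}. 0 < z i" "1 \<le> a" "a < b" "b \<le> Suc n"
  shows "0 < avgz z a b"
proof -
  have "0 < sumz z a b" using assms by (intro sumz_pos) auto
  then show ?thesis unfolding avgz_def using assms by simp
qed

lemma init_inv:
  assumes "\<forall>i\<in>{1..n}. 0 < z i" "0 < K" "\<forall>i\<in>{1..n}. 0 \<le> q i"
  shows "Inv n q z K (alg_init n z K) 0"
proof -
  have nx: "nxt {0, Suc n} a = Suc n" if "a \<in> {1..n}" for a
    by (rule nxt_eqI) (use that in auto)
  show ?thesis unfolding Inv_def alg_init_def
    using nx avg_pos[OF assms(1)] assms by (auto intro: less_imp_le)
qed

lemma step_inv:
  assumes hq: "\<forall>i\<in>{1..n}. \<forall>j\<in>{1..n}. i \<le> j \<longrightarrow> q i \<le> q j"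
    and hz: "\<forall>i\<in>{1..n}. 0 < z i"
    and inv: "Inv n q z K st L"
    and run: "alg_running n st"
  shows "Inv n q z K (alg_step n q z st) (stY st (alg_istar n st)) \<and> alg_istar n st \<notin> stS st"
proof -
  define S where "S = stS st"
  define y where "y = stY st"
  define x where "x = stX st"
  define B where "B = stB st"
  define ist where "ist = alg_istar n st"
  define iL where "iL = Max {j \<in> S. j < ist}"
  define iR where "iR = Min {j \<in> S. j > ist}"
  define d where "d = min (B / (real (iR - ist) * y ist)) (q ist - x ist)"
  define st' where "st' = alg_step n q z st"
  have S': "stS st' = insert ist S" and Y': "stY st' = (\<lambda>i. if iL < i \<and> i < ist then avgz z i ist else y i)"
    and X': "stX st' = (\<lambda>i. if ist \<le> i \<and> i < iR then x i + d else x i)"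
    and B': "stB st' = B - d * real (iR - ist) * y ist"
    unfolding st'_def alg_step_def Let_def S_def y_def x_def B_def ist_def iL_def iR_def d_def by simp_all
  have all: "0 \<in> S \<and> Suc n \<in> S \<and> S \<subseteq> {0..Suc n} \<and>
    (\<forall>a\<in>{1..n}-S. y a = avgz z a (nxt S a) \<and> L \<le> y a) \<and>
    (\<forall>s\<in>{1..n}\<inter>S. avgz z s (nxt S s) \<le> L \<and>
        (x s = q s \<or> (B = 0 \<and> avgz z s (nxt S s) = L))) \<and>
    x 0 = 0 \<and> (\<forall>a\<in>{1..n}-S. x a = x (a-1)) \<and>
    (\<forall>i\<in>{1..n}. 0 \<le> x i \<and> x i \<le> q i) \<and>
    (\<forall>i. 1 \<le> i \<longrightarrow> i < n \<longrightarrow> x i \<le> x (Suc i)) \<and>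
    B = K - (\<Sum>i=1..n. z i * x i) \<and> 0 \<le> B \<and> 0 \<le> L \<and> (B = 0 \<longrightarrow> 0 < L)"
    using inv unfolding Inv_def S_def y_def x_def B_def .
  have I0: "0 \<in> S" "Suc n \<in> S" "S \<subseteq> {0..Suc n}" using all by blast+
  have fS: "finite S" using I0 finite_subset by blast
  have Iun: "\<forall>a\<in>{1..n}-S. y a = avgz z a (nxt S a) \<and> L \<le> y a" using all by blast
  have Ich: "\<forall>s\<in>{1..n}\<inter>S. avgz z s (nxt S s) \<le> L \<and> (x s = q s \<or> (B = 0 \<and> avgz z s (nxt S s) = L))"
    using all by blast
  have Ix0: "x 0 = 0" and Icst: "\<forall>a\<in>{1..n}-S. x a = x (a-1)"
    and Ibnd: "\<forall>i\<in>{1..n}. 0 \<le> x i \<and> x i \<le> q i"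
    and Imono: "\<forall>i. 1 \<le> i \<longrightarrow> i < n \<longrightarrow> x i \<le> x (Suc i)"
    and IB: "B = K - (\<Sum>i=1..n. z i * x i)" "0 \<le> B"
    using all by blast+
  have Bpos: "0 < B" and Sne: "S \<noteq> {0..Suc n}" using run unfolding alg_running_def B_def S_def by auto
  have Une: "{1..n} - stS st \<noteq> {}"
  proof
    assume "{1..n} - stS st = {}"
    then have "{1..n} \<subseteq> S" unfolding S_def by auto
    then have "S = {0..Suc n}" using I0 by (auto simp: le_Suc_eq) (metis atLeastAtMost_iff le_SucE le_zero_eq not_less_eq_eq subsetD)
    then show False using Sne by simp
  qed
  note ist = istar_props[OF Une]
  have is1: "1 \<le> ist" "ist \<le> n" "ist \<notin> S" using ist unfolding ist_def S_def by auto
  have ismin: "\<forall>j\<in>{1..n}-S. y ist \<le> y j" using ist unfolding ist_def S_def y_def by auto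
  have iLp: "iL \<in> S" "iL < ist" "\<And>k. k \<in> S \<Longrightarrow> k < ist \<Longrightarrow> k \<le> iL"
  proof -
    have f: "finite {j \<in> S. j < ist}" using fS by simp
    have ne: "{j \<in> S. j < ist} \<noteq> {}" using I0 is1 by auto
    show "iL \<in> S" "iL < ist" using Max_in[OF f ne] unfolding iL_def by auto
    show "\<And>k. k \<in> S \<Longrightarrow> k < ist \<Longrightarrow> k \<le> iL" unfolding iL_def using f by (intro Max_ge) auto
  qed
  have iRn: "iR = nxt S ist" unfolding iR_def nxt_def by simp
  have isn: "ist < Suc n" using is1 by simp
  note nR = nxt_props[OF fS I0(2) isn]
  have iRp: "iR \<in> S" "ist < iR" "iR \<le> Suc n" "\<And>k. k \<in> S \<Longrightarrow> ist < k \<Longrightarrow> iR \<le> k"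
    using nR unfolding iRn by auto
  have istU: "ist \<in> {1..n} - S" using is1 by auto
  have yis: "y ist = avgz z ist iR" using Iun istU iRn by blast
  have Lle: "L \<le> y ist" using Iun istU by blast
  have ypos: "0 < y ist" using yis avg_pos[OF hz, of ist iR] is1 iRp by simp
  define c where "c = real (iR - ist) * y ist"
  have csum: "c = sumz z ist iR" unfolding c_def yis using sumz_avg[of ist iR z] iRp by simp
  have cpos: "0 < c" unfolding c_def using ypos iRp by simp
  have dform: "d = min (B / c) (q ist - x ist)" unfolding d_def c_def by simp
  have xisq: "x ist \<le> q ist" "0 \<le> x ist" using Ibnd is1 by auto
  have d0: "0 \<le> d" unfolding dform using Bpos cpos xisq by simp
  have dc: "d * c \<le> B"
  proof -
    have "d \<le> B / c" unfolding dform by simp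
    then show ?thesis using cpos by (simp add: pos_le_divide_eq)
  qed
  have dq: "x ist + d \<le> q ist" unfolding dform by simp
  have noSR: "\<And>k. ist < k \<Longrightarrow> k < iR \<Longrightarrow> k \<notin> S" using iRp by force
  have noSL: "\<And>k. iL < k \<Longrightarrow> k < ist \<Longrightarrow> k \<notin> S" using iLp by force
  have blk: "\<And>i. ist \<le> i \<Longrightarrow> i < iR \<Longrightarrow> x i = x ist"
  proof -
    fix i assume a: "ist \<le> i" "i < iR"
    then show "x i = x ist"
    proof (induction i rule: dec_induct)
      case base then show ?case by simp
    next
      case (step m)
      have "Suc m \<in> {1..n} - S" using step noSR[of "Suc m"] iRp is1 by auto
      then have "x (Suc m) = x m" using Icst by auto
      then show ?case using step by simp
    qed
  qed
  have B'eq: "stB st' = B - d * c" unfolding B' c_def by simp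
  
  have N0: "0 \<in> stS st'" "Suc n \<in> stS st'" "stS st' \<subseteq> {0..Suc n}" using I0 is1 unfolding S' by auto
  have nxtS': "\<And>a. a \<le> n \<Longrightarrow> nxt (stS st') a = (if a < ist \<and> ist < nxt S a then ist else nxt S a)"
    unfolding S' using nxt_insert[OF fS I0(2)] by simp
  have nxt_mid: "\<And>a. iL \<le> a \<Longrightarrow> a < ist \<Longrightarrow> nxt S a = iR"
  proof -
    fix a assume a: "iL \<le> a" "a < ist"
    show "nxt S a = iR"
    proof (rule nxt_eqI[OF fS iRp(1)])
      show "a < iR" using a iRp by simp
      fix k assume k: "k \<in> S" "a < k"
      have "\<not> k < ist" using iLp(3)[OF k(1)] a k by fastforce
      moreover have "k \<noteq> ist" using k is1 by auto
      ultimately show "iR \<le> k" using iRp(4)[OF k(1)] by simp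
    qed
  qed
  have N1: "\<forall>a\<in>{1..n}-stS st'. stY st' a = avgz z a (nxt (stS st') a) \<and> y ist \<le> stY st' a"
  proof
    fix a assume a: "a \<in> {1..n} - stS st'"
    then have aS: "a \<notin> S" "a \<noteq> ist" "1 \<le> a" "a \<le> n" unfolding S' by auto
    show "stY st' a = avgz z a (nxt (stS st') a) \<and> y ist \<le> stY st' a"
    proof (cases "iL < a \<and> a < ist")
      case True
      have nS: "nxt S a = iR" using nxt_mid True by simp
      have nS': "nxt (stS st') a = ist" using nxtS'[OF aS(4)] nS True iRp by simp
      have ya: "y a = avgz z a iR" using Iun aS nS by auto
      have "y ist \<le> y a" using ismin aS by auto
      then have "avgz z ist iR \<le> avgz z a iR" using ya yis by simp
      then have "avgz z a iR \<le> avgz z a ist" using avg_left_ge[of a ist iR z] True iRp by simp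
      then show ?thesis using Y' nS' True \<open>y ist \<le> y a\<close> ya by simp
    next
      case False
      have "\<not> (a < ist \<and> ist < nxt S a)"
      proof
        assume h: "a < ist \<and> ist < nxt S a"
        then have "a \<le> iL" using False by simp
        then have "a < iL" using aS iLp by (metis le_neq_implies_less)
        then have "nxt S a \<le> iL" using nxt_props(4)[OF fS I0(2), of a] iLp aS by simp
        then show False using h iLp by simp
      qed
      then have "nxt (stS st') a = nxt S a" using nxtS'[OF aS(4)] by simp
      then show ?thesis using Y' False Iun ismin aS by auto
    qed
  qed
  have xS: "\<And>s. s \<in> S \<Longrightarrow> stX st' s = x s"
  proof -
    fix s assume s: "s \<in> S"
    have "\<not> (ist \<le> s \<and> s < iR)" using s noSR is1 by (metis le_neq_implies_less)
    then show "stX st' s = x s" using X' by auto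
  qed
  have N2: "\<forall>s\<in>{1..n}\<inter>stS st'. avgz z s (nxt (stS st') s) \<le> y ist \<and>
        (stX st' s = q s \<or> (stB st' = 0 \<and> avgz z s (nxt (stS st') s) = y ist))"
  proof
    fix s assume s: "s \<in> {1..n}\<inter>stS st'"
    show "avgz z s (nxt (stS st') s) \<le> y ist \<and>
        (stX st' s = q s \<or> (stB st' = 0 \<and> avgz z s (nxt (stS st') s) = y ist))"
    proof (cases "s = ist")
      case True
      have n': "nxt (stS st') s = iR" using nxtS'[of s] True is1 iRn by simp
      have "stX st' s = x ist + d" using True X' iRp by simp
      moreover have "x ist + d = q ist \<or> (stB st' = 0)"
      proof (cases "B / c \<le> q ist - x ist")
        case True
        then have "d = B / c" unfolding dform by simp
        then have "d * c = B" using cpos by simp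
        then show ?thesis using B'eq by simp
      next
        case False
        then show ?thesis unfolding dform by simp
      qed
      ultimately show ?thesis using n' yis True by auto
    next
      case False
      have sS: "s \<in> S" "1 \<le> s" "s \<le> n" using s False S' by auto
      have xs: "x s = q s" using Ich sS Bpos by auto
      have avL: "avgz z s (nxt S s) \<le> L" using Ich sS by auto
      have "avgz z s (nxt (stS st') s) \<le> y ist"
      proof (cases "s < ist \<and> ist < nxt S s")
        case True
        have nsR: "nxt S s = iR"
        proof (rule antisym)
          show "nxt S s \<le> iR" using nxt_props(4)[OF fS I0(2), of s] iRp True by simp
          show "iR \<le> nxt S s" using iRp(4) nxt_props(1)[OF fS I0(2), of s] True sS by simp
        qed
        have "nxt (stS st') s = ist" using nxtS'[OF sS(3)] True by simp
        moreover have "avgz z s iR \<le> avgz z ist iR" using avL nsR Lle yis by simp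
        then have "avgz z s ist \<le> avgz z s iR" using avg_left_le[of s ist iR z] True iRp by simp
        ultimately show ?thesis using avL nsR Lle by simp
      next
        case False
        have e: "nxt (stS st') s = nxt S s" using nxtS'[OF sS(3)] False by (simp only: if_False)
        show ?thesis unfolding e using avL Lle by linarith
      qed
      then show ?thesis using xs xS sS by simp
    qed
  qed
  have N3: "stX st' 0 = 0" using X' Ix0 is1 by simp
  have N4: "\<forall>a\<in>{1..n}-stS st'. stX st' a = stX st' (a-1)"
  proof
    fix a assume a: "a \<in> {1..n}-stS st'"
    then have aS: "a \<in> {1..n} - S" "a \<noteq> ist" "a \<noteq> iR" using S' iRp by auto
    have e: "x a = x (a-1)" using Icst aS by auto
    consider "ist < a \<and> a < iR" | "a < ist" | "iR < a" using aS by linarith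
    then show "stX st' a = stX st' (a-1)"
    proof cases
      case 1 then show ?thesis using X' e by auto
    next
      case 2 then show ?thesis using X' e by auto
    next
      case 3 then show ?thesis using X' e by auto
    qed
  qed
  have N5: "\<forall>i\<in>{1..n}. 0 \<le> stX st' i \<and> stX st' i \<le> q i"
  proof
    fix i assume i: "i \<in> {1..n}"
    show "0 \<le> stX st' i \<and> stX st' i \<le> q i"
    proof (cases "ist \<le> i \<and> i < iR")
      case True
      have "x i = x ist" using blk[of i] True by simp
      then have "stX st' i = x ist + d" using X' True by simp
      moreover have "q ist \<le> q i" using hq is1 i True by auto
      ultimately show ?thesis using d0 xisq dq by simp
    next
      case False then show ?thesis using X' Ibnd i by auto
    qed
  qed
  have N6: "\<forall>i. 1 \<le> i \<longrightarrow> i < n \<longrightarrow> stX st' i \<le> stX st' (Suc i)"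
  proof (intro allI impI)
    fix i assume i: "1 \<le> i" "i < n"
    have m: "x i \<le> x (Suc i)" using Imono i by simp
    consider "ist \<le> i \<and> i < iR \<and> Suc i < iR" | "ist \<le> i \<and> Suc i = iR" | "Suc i = ist" | "\<not> (ist \<le> i \<and> i < iR) \<and> Suc i \<noteq> ist"
      by linarith
    then show "stX st' i \<le> stX st' (Suc i)"
    proof cases
      case 1 then show ?thesis using X' m by simp
    next
      case 2
      have "iR \<in> {1..n} \<inter> S" using 2 i iRp by auto
      then have "x iR = q iR" using Ich Bpos by auto
      moreover have "q ist \<le> q iR" using hq is1 2 i by auto
      moreover have "x i = x ist" using blk[of i] 2 iRp by simp
      moreover have "stX st' i = x i + d" using X' 2 iRp by simp
      moreover have "stX st' (Suc i) = x iR" using X' 2 by simp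
      ultimately show ?thesis using dq by linarith
    next
      case 3
      have "stX st' i = x i" using X' 3 by simp
      moreover have "stX st' (Suc i) = x ist + d" using X' 3 iRp by simp
      ultimately show ?thesis using m 3 d0 by simp
    next
      case 4
      have "\<not> (ist \<le> Suc i \<and> Suc i < iR)" using 4 by auto
      then show ?thesis using X' m 4 by auto
    qed
  qed
  have sumx: "(\<Sum>i=1..n. z i * stX st' i) = (\<Sum>i=1..n. z i * x i) + d * c"
  proof -
    have "(\<Sum>i=1..n. z i * stX st' i) = (\<Sum>i=1..n. z i * x i + (if i \<in> {ist..<iR} then d * z i else 0))"
      unfolding X' by (rule sum.cong) (auto simp: algebra_simps)
    also have "\<dots> = (\<Sum>i=1..n. z i * x i) + (\<Sum>i=1..n. (if i \<in> {ist..<iR} then d * z i else 0))"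
      by (simp add: sum.distrib)
    also have "(\<Sum>i=1..n. (if i \<in> {ist..<iR} then d * z i else 0)) = (\<Sum>i\<in>{1..n} \<inter> {ist..<iR}. d * z i)"
      by (simp add: sum.inter_restrict)
    also have "{1..n} \<inter> {ist..<iR} = {ist..<iR}" using is1 iRp by auto
    also have "(\<Sum>i\<in>{ist..<iR}. d * z i) = d * c" unfolding csum sumz_def by (simp add: sum_distrib_left)
    finally show ?thesis .
  qed
  have N7: "stB st' = K - (\<Sum>i=1..n. z i * stX st' i)" using B'eq sumx IB by simp
  have N8: "0 \<le> stB st'" using B'eq dc by simp
  have "Inv n q z K st' (y ist)"
    unfolding Inv_def using N0 N1 N2 N3 N4 N5 N6 N7 N8 ypos less_imp_le[OF ypos] by (intro conjI impI; blast)
  then show ?thesis using is1 unfolding st'_def y_def ist_def S_def by simp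
qed

lemma Inv_facts:
  assumes "Inv n q z K st L"
  shows "0 \<in> stS st" "Suc n \<in> stS st" "stS st \<subseteq> {0..Suc n}"
    "\<forall>a\<in>{1..n}-stS st. stY st a = avgz z a (nxt (stS st) a) \<and> L \<le> stY st a"
    "\<forall>s\<in>{1..n}\<inter>stS st. avgz z s (nxt (stS st) s) \<le> L \<and>
        (stX st s = q s \<or> (stB st = 0 \<and> avgz z s (nxt (stS st) s) = L))"
    "stX st 0 = 0" "\<forall>a\<in>{1..n}-stS st. stX st a = stX st (a-1)"
    "\<forall>i\<in>{1..n}. 0 \<le> stX st i \<and> stX st i \<le> q i"
    "\<forall>i. 1 \<le> i \<longrightarrow> i < n \<longrightarrow> stX st i \<le> stX st (Suc i)"
    "stB st = K - (\<Sum>i=1..n. z i * stX st i)" "0 \<le> stB st" "0 \<le> L" "stB st = 0 \<longrightarrow> 0 < L"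
  using assms unfolding Inv_def by blast+

lemma mono_all:
  fixes x :: "nat \<Rightarrow> real"
  assumes "\<forall>i. 1 \<le> i \<longrightarrow> i < n \<longrightarrow> x i \<le> x (Suc i)"
  shows "\<forall>i\<in>{1..n}. \<forall>j\<in>{1..n}. i \<le> j \<longrightarrow> x i \<le> x j"
proof (intro ballI impI)
  fix i j assume ij: "i \<in> {1..n}" "j \<in> {1..n}" "i \<le> j"
  from ij(3) show "x i \<le> x j" using ij(2)
  proof (induction j rule: dec_induct)
    case base then show ?case by simp
  next
    case (step m)
    then have "x m \<le> x (Suc m)" using assms ij(1) by auto
    moreover have "x i \<le> x m" using step ij by auto
    ultimately show ?case by linarith
  qed
qed

lemma final_opt:
  assumes hq: "\<forall>i\<in>{1..n}. \<forall>j\<in>{1..n}. i \<le> j \<longrightarrow> q i \<le> q j"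
    and hz: "\<forall>i\<in>{1..n}. 0 < z i" and n1: "1 \<le> n"
    and inv: "Inv n q z K st L" and nrun: "\<not> alg_running n st"
  shows "optimalP n q z K (stX st)"
proof -
  define S where "S = stS st"
  define x where "x = stX st"
  define B where "B = stB st"
  note F = Inv_facts[OF inv, folded S_def x_def B_def]
  have fS: "finite S" using F(3) finite_subset by blast
  have feas: "feasibleP n q z K x"
    unfolding feasibleP_def using F(8) mono_all[OF F(9)] F(10,11) by auto
  have opt: "(\<Sum>i=1..n. x' i) \<le> (\<Sum>i=1..n. x i)" if fx': "feasibleP n q z K x'" for x'
  proof -
    have x'b: "\<forall>i\<in>{1..n}. 0 \<le> x' i \<and> x' i \<le> q i"
      and x'm: "\<forall>i\<in>{1..n}. \<forall>j\<in>{1..n}. i \<le> j \<longrightarrow> x' i \<le> x' j"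
      and x'c: "(\<Sum>i=1..n. z i * x' i) \<le> K" using fx' unfolding feasibleP_def by auto
    show ?thesis
    proof (cases "B = 0")
      case False
      then have "0 < B" using F(11) by simp
      then have "S = {0..Suc n}" using nrun unfolding alg_running_def S_def B_def by simp
      then have "\<forall>i\<in>{1..n}. x i = q i" using F(5) False by auto
      then show ?thesis using x'b by (intro sum_mono) auto
    next
      case True
      have L0: "0 < L" using True F(13) by simp
      define w where "w i = 1 - z i / L" for i
      define T where "T = {1..n} \<inter> S"
      define N where "N = nxt S"
      define G where "G a = (\<Sum>i\<in>{a..<N a}. w i)" for a
      have Tsub: "T \<subseteq> {1..n}" unfolding T_def by auto
      have Nlt: "\<forall>a\<in>{1..n}. a < N a" unfolding N_def using nxt_props(2)[OF fS F(2)] by auto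
      have Nn: "N n = Suc n" unfolding N_def
        by (rule nxt_eqI[OF fS F(2)]) (use F(3) in auto)
      have Nin: "\<forall>a. 1 \<le> a \<longrightarrow> a < n \<longrightarrow> Suc a \<in> T \<longrightarrow> N a = Suc a"
        unfolding N_def T_def by (auto intro!: nxt_eqI[OF fS])
      have Nout: "\<forall>a. 1 \<le> a \<longrightarrow> a < n \<longrightarrow> Suc a \<notin> T \<longrightarrow> N a = N (Suc a)"
      proof (intro allI impI)
        fix a assume a: "1 \<le> a" "a < n" "Suc a \<notin> T"
        then have aS: "Suc a \<notin> S" unfolding T_def by auto
        note P = nxt_props[OF fS F(2), of "Suc a"]
        show "N a = N (Suc a)" unfolding N_def
          by (rule nxt_eqI[OF fS]) (use P a aS in \<open>auto simp: Suc_le_eq\<close>, metis Suc_lessI)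
      qed
      have Gform: "G a = real (N a - a) * (1 - avgz z a (N a) / L)" if "a \<in> {1..n}" for a
      proof -
        have "G a = (\<Sum>i\<in>{a..<N a}. 1) - (\<Sum>i\<in>{a..<N a}. z i) / L"
          unfolding G_def w_def by (simp add: sum_subtractf sum_divide_distrib)
        also have "\<dots> = real (N a - a) - sumz z a (N a) / L" unfolding sumz_def by simp
        also have "\<dots> = real (N a - a) * (1 - avgz z a (N a) / L)"
          unfolding sumz_avg[of a "N a" z, OF Nlt[rule_format, OF that]]
          by (simp only: right_diff_distrib mult_1_right times_divide_eq_right)
        finally show ?thesis .
      qed
      have Gpos: "\<forall>s\<in>T. 0 \<le> G s"
      proof
        fix s assume s: "s \<in> T"
        have "avgz z s (N s) \<le> L" using F(5) s unfolding T_def N_def by blast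
        then have "avgz z s (N s) / L \<le> 1" using L0 by simp
        then show "0 \<le> G s" using Gform[of s] s Tsub by auto
      qed
      have Gneg: "\<forall>a\<in>{1..n}-T. G a \<le> 0"
      proof
        fix a assume a: "a \<in> {1..n}-T"
        then have aU: "a \<in> {1..n} - S" unfolding T_def by auto
        have h: "stY st a = avgz z a (nxt S a) \<and> L \<le> stY st a" using F(4) aU by blast
        have "L \<le> avgz z a (N a)" using h unfolding N_def by linarith
        then have "1 \<le> avgz z a (N a) / L" using L0 by simp
        then show "G a \<le> 0" using Gform[of a] a by (simp add: mult_nonneg_nonpos)
      qed
      have G0: "\<forall>s\<in>T. x s * G s = q s * G s"
      proof
        fix s assume s: "s \<in> T"
        have "x s = q s \<or> avgz z s (N s) = L" using F(5) s unfolding T_def N_def by blast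
        then show "x s * G s = q s * G s" using Gform[of s] s Tsub L0 by auto
      qed
      define R where "R = (\<Sum>s\<in>{Suc 1..n}. if s\<in>T then q s * G s else 0)"
      define R0 where "R0 = (\<Sum>s\<in>{1..n}. if s\<in>T then q s * G s else 0)"
      have R0R: "R0 = (if 1 \<in> T then q 1 * G 1 else 0) + R"
        unfolding R0_def R_def using n1 by (simp add: sum.atLeast_Suc_atMost)
      have ineq: "(\<Sum>i=1..n. w i * x' i) \<le> x' 1 * G 1 + R"
        unfolding R_def
        by (rule gen_ineq[OF Tsub Nn Nin Nout Nlt _ Gpos Gneg]) (use G_def x'm x'b Tsub n1 in auto)
      have eq: "(\<Sum>i=1..n. w i * x i) = x 1 * G 1 + R"
      proof -
        have cst: "\<forall>i. 1 \<le> i \<longrightarrow> i < n \<longrightarrow> Suc i \<notin> T \<longrightarrow> x i = x (Suc i)"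
          using F(7) unfolding T_def by auto
        show ?thesis unfolding R_def
          by (rule gen_eq[OF Tsub Nn Nin Nout Nlt _ cst G0]) (use G_def n1 in auto)
      qed
      have i1: "x' 1 * G 1 + R \<le> R0"
      proof (cases "1 \<in> T")
        case True
        then have "x' 1 * G 1 \<le> q 1 * G 1" using Gpos x'b n1 by (simp add: mult_right_mono)
        then show ?thesis using R0R True by simp
      next
        case False
        then have "G 1 \<le> 0" using Gneg n1 by auto
        moreover have "0 \<le> x' 1" using x'b n1 by auto
        ultimately have "x' 1 * G 1 \<le> 0" by (simp add: mult_nonneg_nonpos)
        then show ?thesis using R0R False by simp
      qed
      have e1: "x 1 * G 1 + R = R0"
      proof (cases "1 \<in> T")
        case True then show ?thesis using R0R G0 by simp
      next
        case False
        then have "1 \<in> {1..n} - S" using n1 unfolding T_def by auto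
        then have "x 1 = 0" using F(7) F(6) by auto
        then show ?thesis using R0R False by simp
      qed
      have wsum: "(\<Sum>i=1..n. w i * v i) = (\<Sum>i=1..n. v i) - (\<Sum>i=1..n. z i * v i) / L" for v
        unfolding w_def by (simp add: algebra_simps sum_subtractf sum_divide_distrib)
      have zx: "(\<Sum>i=1..n. z i * x i) = K" using F(10) True by simp
      have "(\<Sum>i=1..n. x' i) \<le> R0 + (\<Sum>i=1..n. z i * x' i) / L"
        using ineq i1 wsum[of x'] by simp
      also have "\<dots> \<le> R0 + K / L" using x'c L0 by (simp add: divide_right_mono)
      also have "\<dots> = (\<Sum>i=1..n. x i)" using eq e1 wsum[of x] zx by simp
      finally show ?thesis .
    qed
  qed
  show ?thesis unfolding optimalP_def using feas opt x_def by auto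
qed

lemma iter_suc: "alg_iter n q z K (Suc m) = alg_step n q z (alg_iter n q z K m)"
  unfolding alg_iter_def by simp

lemma step_S: "stS (alg_step n q z st) = insert (alg_istar n st) (stS st)"
  unfolding alg_step_def Let_def by simp

lemma iter_inv:
  assumes hq: "\<forall>i\<in>{1..n}. \<forall>j\<in>{1..n}. i \<le> j \<longrightarrow> q i \<le> q j"
    and hz: "\<forall>i\<in>{1..n}. 0 < z i" and K: "0 < K" and q0: "\<forall>i\<in>{1..n}. 0 \<le> q i"
  shows "(\<forall>j<m. alg_running n (alg_iter n q z K j)) \<Longrightarrow>
     (\<exists>L. Inv n q z K (alg_iter n q z K m) L) \<and> card (stS (alg_iter n q z K m)) = m + 2"
proof (induction m)
  case 0
  then show ?case using init_inv[OF hz K q0] by (auto simp: alg_iter_def alg_init_def)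
next
  case (Suc m)
  then obtain L where L: "Inv n q z K (alg_iter n q z K m) L" and c: "card (stS (alg_iter n q z K m)) = m + 2"
    by auto
  have run: "alg_running n (alg_iter n q z K m)" using Suc.prems by simp
  note st = step_inv[OF hq hz L run]
  have fin: "finite (stS (alg_iter n q z K m))" using Inv_facts(3)[OF L] finite_subset by blast
  show ?case using st c fin by (auto simp: iter_suc step_S)
qed

lemma terminates:
  assumes hq: "\<forall>i\<in>{1..n}. \<forall>j\<in>{1..n}. i \<le> j \<longrightarrow> q i \<le> q j"
    and hz: "\<forall>i\<in>{1..n}. 0 < z i" and K: "0 < K" and q0: "\<forall>i\<in>{1..n}. 0 \<le> q i"
  shows "\<exists>m. \<not> alg_running n (alg_iter n q z K m)"
proof (rule ccontr)
  assume "\<not> ?thesis"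
  then have "\<forall>j<Suc (Suc n). alg_running n (alg_iter n q z K j)" by simp
  from iter_inv[OF assms this] obtain L where
    L: "Inv n q z K (alg_iter n q z K (Suc (Suc n))) L" and c: "card (stS (alg_iter n q z K (Suc (Suc n)))) = Suc (Suc n) + 2"
    by blast
  have "card (stS (alg_iter n q z K (Suc (Suc n)))) \<le> card {0..Suc n}"
    using Inv_facts(3)[OF L] by (intro card_mono) auto
  then show False using c by simp
qed

theorem lemma5:
  fixes n :: nat and q z :: "nat \<Rightarrow> real" and K :: real
  assumes "n \<ge> 1"
    and "0 < q 1"
    and "\<forall>i\<in>{1..n}. \<forall>j\<in>{1..n}. i \<le> j \<longrightarrow> q i \<le> q j"
    and "\<forall>i\<in>{1..n}. z i > 0"
    and "K > 0"
  shows "\<exists>xs. optimalP n q z K xs \<and>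
           (\<forall>j\<in>{1..alg_num_iter n q z K}.
              xs (alg_chosen n q z K j) = alg_output n q z K (alg_chosen n q z K j))"
proof -
  have q0: "\<forall>i\<in>{1..n}. 0 \<le> q i"
  proof
    fix i assume i: "i \<in> {1..n}"
    then have "q 1 \<le> q i" using assms(1,3) by auto
    then show "0 \<le> q i" using assms(2) by simp
  qed
  have hz': "\<forall>i\<in>{1..n}. 0 < z i" using assms(4) by simp
  define k where "k = alg_num_iter n q z K"
  have ex: "\<exists>m. \<not> alg_running n (alg_iter n q z K m)"
    using terminates[OF assms(3) hz' assms(5) q0] .
  have nrun: "\<not> alg_running n (alg_iter n q z K k)"
    unfolding k_def alg_num_iter_def using LeastI_ex[OF ex] .
  have runs: "\<forall>j<k. alg_running n (alg_iter n q z K j)"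
    unfolding k_def alg_num_iter_def using not_less_Least by blast
  obtain L where L: "Inv n q z K (alg_iter n q z K k) L"
    using iter_inv[OF assms(3) hz' assms(5) q0 runs] by blast
  have "optimalP n q z K (stX (alg_iter n q z K k))"
    by (rule final_opt[OF assms(3) hz' assms(1) L nrun])
  then have "optimalP n q z K (alg_output n q z K)"
    unfolding alg_output_def k_def .
  then show ?thesis by blast
qed

end
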